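(* Let $p=(p_1,\dots,p_n)$ be pairwise distinct points of $Q$ with $M_{W_i}>0$ for all $i$, and let $p'=(p_1',\dots,p_n')$ be obtained from one step of the higher order Lloyd algorithm, i.e. $p_i'=C_{W_i}$ for each $i$, where $W_i$, $C_{W_i}$ are computed from the order-2 Voronoi partition generated by $p$. Then $\mathcal H(p')\le\mathcal H(p)$, and the inequality is strict unless $p_i=C_{W_i}$ for every $i$.
   Context: $Q\subset\mathbb{R}^2$ is a compact convex polygon, $\phi:Q\to[0,\infty)$ a $C^2$ density, $n\ge3$, $C=\{(a,b):1\le a<b\le n\}$, and $\mathcal H(p_1,\dots,p_n)=\int_Q\min_{(a,b)\in C}\tfrac12(\|q-p_a\|^2+\|q-p_b\|^2)\phi(q)dq$. For $i\ne j$, $V_{\mathcal T_{ij}}=\{q\in Q:\|q-p_v\|\le\|q-p_w\|\ \forall v\in\{i,j\},\ w\notin\{i,j\}\}$ is the order-2 Voronoi cell generated by $\{p_i,p_j\}$; $\mathcal P_i$ is the set of generating pairs containing $i$; $M_V=\int_V\phi$, $C_V=\frac1{M_V}\int_Vq\phi(q)dq$; $W_i=\bigcup_{\mathcal T_{ij}\in\mathcal P_i}V_{\mathcal T_{ij}}$, $M_{W_i}=\sum_{\mathcal T_{ij}\in\mathcal P_i}M_{V_{\mathcal T_{ij}}}$, $C_{W_i}=\frac1{M_{W_i}}\sum_{\mathcal T_{ij}\in\mathcal P_i}M_{V_{\mathcal T_{ij}}}C_{V_{\mathcal T_{ij}}}$. *)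

theory Defs
  imports "HOL-Analysis.Analysis"
begin

type_synonym pt = "real^2"

definition convex_polygon :: "pt set \<Rightarrow> bool" where
  "convex_polygon Q \<longleftrightarrow> (\<exists>S. finite S \<and> Q = convex hull S) \<and> interior Q \<noteq> {}"

definition C2_on :: "pt set \<Rightarrow> (pt \<Rightarrow> real) \<Rightarrow> bool" where
  "C2_on Q f \<longleftrightarrow> (\<exists>U D1 D2. open U \<and> Q \<subseteq> U \<and>
      (\<forall>x\<in>U. (f has_derivative blinfun_apply (D1 x)) (at x)) \<and>
      (\<forall>x\<in>U. (D1 has_derivative blinfun_apply (D2 x)) (at x)) \<and>
      continuous_on U D2)"

text \<open>Points are indexed by 1..n via p :: nat => pt.\<close>

definition pairs :: "nat \<Rightarrow> (nat \<times> nat) set" where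
  "pairs n = {(a,b). 1 \<le> a \<and> a < b \<and> b \<le> n}"

definition H :: "pt set \<Rightarrow> (pt \<Rightarrow> real) \<Rightarrow> nat \<Rightarrow> (nat \<Rightarrow> pt) \<Rightarrow> real" where
  "H Q \<phi> n p = integral Q (\<lambda>q.
      Min ((\<lambda>(a,b). (norm (q - p a))\<^sup>2 / 2 + (norm (q - p b))\<^sup>2 / 2) ` pairs n) * \<phi> q)"

definition VT :: "pt set \<Rightarrow> nat \<Rightarrow> (nat \<Rightarrow> pt) \<Rightarrow> nat \<Rightarrow> nat \<Rightarrow> pt set" where
  "VT Q n p i j = {q \<in> Q. \<forall>v\<in>{i,j}. \<forall>w\<in>{1..n} - {i,j}. norm (q - p v) \<le> norm (q - p w)}"

text \<open>Generating pairs containing i, represented by the partner index j.\<close>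
definition Pset :: "pt set \<Rightarrow> nat \<Rightarrow> (nat \<Rightarrow> pt) \<Rightarrow> nat \<Rightarrow> nat set" where
  "Pset Q n p i = {j \<in> {1..n}. j \<noteq> i \<and> VT Q n p i j \<noteq> {}}"

definition mass :: "(pt \<Rightarrow> real) \<Rightarrow> pt set \<Rightarrow> real" where
  "mass \<phi> V = integral V \<phi>"

definition centroid :: "(pt \<Rightarrow> real) \<Rightarrow> pt set \<Rightarrow> pt" where
  "centroid \<phi> V = (1 / mass \<phi> V) *\<^sub>R integral V (\<lambda>q. \<phi> q *\<^sub>R q)"

definition W :: "pt set \<Rightarrow> nat \<Rightarrow> (nat \<Rightarrow> pt) \<Rightarrow> nat \<Rightarrow> pt set" where
  "W Q n p i = (\<Union>j\<in>Pset Q n p i. VT Q n p i j)"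

definition MW :: "pt set \<Rightarrow> (pt \<Rightarrow> real) \<Rightarrow> nat \<Rightarrow> (nat \<Rightarrow> pt) \<Rightarrow> nat \<Rightarrow> real" where
  "MW Q \<phi> n p i = (\<Sum>j\<in>Pset Q n p i. mass \<phi> (VT Q n p i j))"

definition CW :: "pt set \<Rightarrow> (pt \<Rightarrow> real) \<Rightarrow> nat \<Rightarrow> (nat \<Rightarrow> pt) \<Rightarrow> nat \<Rightarrow> pt" where
  "CW Q \<phi> n p i = (1 / MW Q \<phi> n p i) *\<^sub>R
      (\<Sum>j\<in>Pset Q n p i. mass \<phi> (VT Q n p i j) *\<^sub>R centroid \<phi> (VT Q n p i j))"

end

theory Submission
  imports Defs "HOL-Analysis.Analysis"
begin


lemma cont_int:
  fixes f :: "pt \<Rightarrow> 'b::euclidean_space"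
  assumes "compact S" "continuous_on S f"
  shows "f integrable_on S"
proof -
  have "(\<lambda>x. indicator S x *\<^sub>R f x) integrable_on UNIV"
    using integrable_on_lborel[OF borel_integrable_compact[OF assms]] .
  moreover have "(\<lambda>x. indicator S x *\<^sub>R f x) = (\<lambda>x. if x \<in> S then f x else 0)"
    by (auto simp: indicator_def)
  ultimately show ?thesis using integrable_restrict_Int[of S f UNIV] by simp
qed

lemma tie_negligible:
  fixes a b :: pt assumes "a \<noteq> b"
  shows "negligible {q. norm (q - a) = norm (q - b)}"
proof -
  have "{q. norm (q - a) = norm (q - b)} \<subseteq> {q. (2 *\<^sub>R (b - a)) \<bullet> q = b \<bullet> b - a \<bullet> a}"
  proof
    fix q assume "q \<in> {q. norm (q - a) = norm (q - b)}"
    then have "(norm (q - a))\<^sup>2 = (norm (q - b))\<^sup>2" by simp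
    then have "(q-a)\<bullet>(q-a) = (q-b)\<bullet>(q-b)" by (simp add: power2_norm_eq_inner)
    then show "q \<in> {q. (2 *\<^sub>R (b - a)) \<bullet> q = b \<bullet> b - a \<bullet> a}"
      by (simp add: inner_diff_left inner_diff_right inner_commute algebra_simps)
  qed
  moreover have "negligible {q. (2 *\<^sub>R (b - a)) \<bullet> q = b \<bullet> b - a \<bullet> a}"
    by (rule negligible_hyperplane) (use assms in auto)
  ultimately show ?thesis using negligible_subset by blast
qed

lemma pair_le_aux:
  fixes e :: "nat \<Rightarrow> real"
  assumes "a \<noteq> b" "c \<noteq> d" "\<forall>w\<in>S-{a,b}. e a \<le> e w \<and> e b \<le> e w" "c \<in> S" "d \<in> S"
  shows "e a + e b \<le> e c + e d"
proof -
  have h: "w \<in> S \<Longrightarrow> w \<noteq> a \<Longrightarrow> w \<noteq> b \<Longrightarrow> e a \<le> e w \<and> e b \<le> e w" for w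
    using assms(3) by blast
  show ?thesis
  proof (cases "c = a \<or> c = b")
    case True
    then show ?thesis
    proof
      assume "c = a" then show ?thesis using h[of d] assms by (cases "d = b") auto
    next
      assume "c = b" then show ?thesis using h[of d] assms by (cases "d = a") auto
    qed
  next
    case False
    then have c: "e a \<le> e c" "e b \<le> e c" using h[of c] assms by auto
    show ?thesis
    proof (cases "d = a \<or> d = b")
      case True then show ?thesis using c by auto
    next
      case False then have "e b \<le> e d" using h[of d] assms by blast
      then show ?thesis using c by linarith
    qed
  qed
qed

lemma nearest:
  fixes D :: "nat \<Rightarrow> real"
  assumes "n \<ge> 3"
  shows "\<exists>a b. a \<in> {1..n} \<and> b \<in> {1..n} \<and> a \<noteq> b \<and> (\<forall>w\<in>{1..n}-{a,b}. D a \<le> D w \<and> D b \<le> D w)"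
proof -
  have ne: "{1..n} \<noteq> {}" using assms by auto
  have "Min (D ` {1..n}) \<in> D ` {1..n}" using ne by (intro Min_in) auto
  then obtain a where a: "a \<in> {1..n}" "D a = Min (D ` {1..n})" by (metis imageE)
  have ne2: "{1..n} - {a} \<noteq> {}"
  proof -
    have "(if a = 1 then 2 else 1) \<in> {1..n} - {a}" using assms by auto
    then show ?thesis by blast
  qed
  have "Min (D ` ({1..n} - {a})) \<in> D ` ({1..n} - {a})" using ne2 by (intro Min_in) auto
  then obtain b where b: "b \<in> {1..n} - {a}" "D b = Min (D ` ({1..n} - {a}))" by (metis imageE)
  have "\<forall>w\<in>{1..n}-{a,b}. D a \<le> D w \<and> D b \<le> D w"
    using a b by (auto intro!: Min_le)
  then show ?thesis using a b by blast
qed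

lemma dsum_ge:
  fixes T :: "nat \<Rightarrow> nat \<Rightarrow> real"
  assumes "finite S" "a \<in> S" "b \<in> S" "a \<noteq> b" "\<And>i j. 0 \<le> T i j"
  shows "T a b + T b a \<le> (\<Sum>i\<in>S. \<Sum>j\<in>S-{i}. T i j)"
proof -
  have "T a b \<le> (\<Sum>j\<in>S-{a}. T a j)"
    using assms by (intro member_le_sum) auto
  moreover have "T b a \<le> (\<Sum>j\<in>S-{b}. T b j)"
    using assms by (intro member_le_sum) auto
  moreover have "(\<Sum>i\<in>{a,b}. \<Sum>j\<in>S-{i}. T i j) \<le> (\<Sum>i\<in>S. \<Sum>j\<in>S-{i}. T i j)"
    using assms by (intro sum_mono2) (auto intro: sum_nonneg)
  ultimately show ?thesis using assms by simp
qed

lemma dsum_eq: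
  fixes T :: "nat \<Rightarrow> nat \<Rightarrow> real"
  assumes "finite S" "a \<in> S" "b \<in> S" "a \<noteq> b"
    and z: "\<And>i j. i \<in> S \<Longrightarrow> j \<in> S - {i} \<Longrightarrow> T i j \<noteq> 0 \<Longrightarrow> (i = a \<and> j = b) \<or> (i = b \<and> j = a)"
  shows "(\<Sum>i\<in>S. \<Sum>j\<in>S-{i}. T i j) = T a b + T b a"
proof -
  have ia: "(\<Sum>j\<in>S-{a}. T a j) = T a b"
  proof -
    have "(\<Sum>j\<in>S-{a}. T a j) = (\<Sum>j\<in>S-{a}. if j = b then T a b else 0)"
      using z[of a] assms(2,4) by (intro sum.cong) auto
    also have "\<dots> = T a b" using assms by simp
    finally show ?thesis .
  qed
  have ib: "(\<Sum>j\<in>S-{b}. T b j) = T b a"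
  proof -
    have "(\<Sum>j\<in>S-{b}. T b j) = (\<Sum>j\<in>S-{b}. if j = a then T b a else 0)"
      using z[of b] assms(3,4) by (intro sum.cong) auto
    also have "\<dots> = T b a" using assms by simp
    finally show ?thesis .
  qed
  have io: "(\<Sum>j\<in>S-{i}. T i j) = 0" if "i \<in> S" "i \<noteq> a" "i \<noteq> b" for i
    using z[of i] that by (intro sum.neutral) blast
  have "(\<Sum>i\<in>S. \<Sum>j\<in>S-{i}. T i j) = (\<Sum>i\<in>S. (if i = a then T a b else 0) + (if i = b then T b a else 0))"
  proof (intro sum.cong refl)
    fix i assume "i \<in> S"
    then show "(\<Sum>j\<in>S-{i}. T i j) = (if i = a then T a b else 0) + (if i = b then T b a else 0)"
      using ia ib io assms(4) by (cases "i = a"; cases "i = b") auto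
  qed
  also have "\<dots> = T a b + T b a" using assms by (simp add: sum.distrib)
  finally show ?thesis .
qed


lemma real_aux:
  fixes A B C t f :: real
  assumes "A = B + 2 * t + C" "s = f * t"
  shows "A * f = (B * f + 2 * s) + f * C"
  using assms by (simp add: algebra_simps)

lemma cell_id:
  fixes V :: "pt set" and y c :: pt
  assumes V: "compact V" and phi: "continuous_on V \<phi>"
  shows "integral V (\<lambda>q. (norm (q - y))\<^sup>2 * \<phi> q) =
     integral V (\<lambda>q. (norm (q - c))\<^sup>2 * \<phi> q)
     + 2 * ((integral V (\<lambda>q. \<phi> q *\<^sub>R q) - integral V \<phi> *\<^sub>R c) \<bullet> (c - y))
     + integral V \<phi> * (norm (c - y))\<^sup>2"
proof -
  have pw: "(norm (q - y))\<^sup>2 * \<phi> q = ((norm (q - c))\<^sup>2 * \<phi> q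
       + 2 * ((\<phi> q *\<^sub>R q - \<phi> q *\<^sub>R c) \<bullet> (c - y)))
       + \<phi> q * (norm (c - y))\<^sup>2" for q
  proof -
    have e: "q - y = (q - c) + (c - y)" by simp
    have "(norm (q - y))\<^sup>2 = ((q - c) + (c - y)) \<bullet> ((q - c) + (c - y))"
      by (simp add: power2_norm_eq_inner)
    also have "\<dots> = (q - c) \<bullet> (q - c) + 2 * ((q - c) \<bullet> (c - y)) + (c - y) \<bullet> (c - y)"
      unfolding inner_add_left inner_add_right by (simp add: inner_commute)
    also have "\<dots> = (norm (q - c))\<^sup>2 + 2 * ((q - c) \<bullet> (c - y)) + (norm (c - y))\<^sup>2"
      by (simp add: power2_norm_eq_inner)
    finally have "(norm (q - y))\<^sup>2 = (norm (q - c))\<^sup>2 + 2 * ((q - c) \<bullet> (c - y)) + (norm (c - y))\<^sup>2" .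
    moreover have "(\<phi> q *\<^sub>R q - \<phi> q *\<^sub>R c) \<bullet> (c - y) = \<phi> q * ((q - c) \<bullet> (c - y))"
      by (simp add: scaleR_diff_right[symmetric])
    ultimately show ?thesis using real_aux by metis
  qed
  have i1: "(\<lambda>q. (norm (q - c))\<^sup>2 * \<phi> q) integrable_on V"
    by (rule cont_int[OF V]) (intro continuous_intros phi)
  have i2v: "(\<lambda>q. \<phi> q *\<^sub>R q) integrable_on V"
    by (rule cont_int[OF V]) (intro continuous_intros phi)
  have i2c: "(\<lambda>q. \<phi> q *\<^sub>R c) integrable_on V"
    by (rule cont_int[OF V]) (intro continuous_intros phi)
  have i0: "\<phi> integrable_on V" by (rule cont_int[OF V phi])
  have i2: "(\<lambda>q. \<phi> q *\<^sub>R q - \<phi> q *\<^sub>R c) integrable_on V"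
    using i2v i2c by (rule integrable_diff)
  have i2': "(\<lambda>q. 2 * ((\<phi> q *\<^sub>R q - \<phi> q *\<^sub>R c) \<bullet> (c - y))) integrable_on V"
    by (rule cont_int[OF V]) (intro continuous_intros phi)
  have i3: "(\<lambda>q. \<phi> q * (norm (c - y))\<^sup>2) integrable_on V"
    by (rule cont_int[OF V]) (intro continuous_intros phi)
  have ic: "integral V (\<lambda>q. \<phi> q *\<^sub>R c) = integral V \<phi> *\<^sub>R c"
    using has_integral_scaleR_left[OF integrable_integral[OF i0], of c]
    by (simp add: integral_unique)
  have il: "integral V (\<lambda>q. (\<phi> q *\<^sub>R q - \<phi> q *\<^sub>R c) \<bullet> (c - y))
      = integral V (\<lambda>q. \<phi> q *\<^sub>R q - \<phi> q *\<^sub>R c) \<bullet> (c - y)"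
    using integral_linear[OF i2 bounded_linear_inner_left[of "c - y"]] by (simp add: o_def)
  have "integral V (\<lambda>q. (norm (q - y))\<^sup>2 * \<phi> q) = integral V (\<lambda>q. ((norm (q - c))\<^sup>2 * \<phi> q
       + 2 * ((\<phi> q *\<^sub>R q - \<phi> q *\<^sub>R c) \<bullet> (c - y)))
       + \<phi> q * (norm (c - y))\<^sup>2)" by (simp only: pw)
  also have "\<dots> = integral V (\<lambda>q. (norm (q - c))\<^sup>2 * \<phi> q)
       + integral V (\<lambda>q. 2 * ((\<phi> q *\<^sub>R q - \<phi> q *\<^sub>R c) \<bullet> (c - y)))
       + integral V (\<lambda>q. \<phi> q * (norm (c - y))\<^sup>2)"
    by (simp add: integral_add integrable_add i1 i2' i3)
  also have "\<dots> = integral V (\<lambda>q. (norm (q - c))\<^sup>2 * \<phi> q)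
     + 2 * ((integral V (\<lambda>q. \<phi> q *\<^sub>R q) - integral V \<phi> *\<^sub>R c) \<bullet> (c - y))
     + integral V \<phi> * (norm (c - y))\<^sup>2"
    using il ic by (simp add: integral_diff i2v i2c)
  finally show ?thesis .
qed

lemma Min_at:
  fixes x :: "nat \<Rightarrow> pt"
  assumes "a \<in> {1..n}" "b \<in> {1..n}" "a \<noteq> b"
    and near: "\<forall>w\<in>{1..n}-{a,b}. norm (q - x a) \<le> norm (q - x w) \<and> norm (q - x b) \<le> norm (q - x w)"
  shows "Min ((\<lambda>(c,d). (norm (q - x c))\<^sup>2 / 2 + (norm (q - x d))\<^sup>2 / 2) ` pairs n)
     = (norm (q - x a))\<^sup>2 / 2 + (norm (q - x b))\<^sup>2 / 2"
proof (rule Min_eqI)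
  have "pairs n \<subseteq> {1..n} \<times> {1..n}" by (auto simp: pairs_def)
  then show "finite ((\<lambda>(c,d). (norm (q - x c))\<^sup>2 / 2 + (norm (q - x d))\<^sup>2 / 2) ` pairs n)"
    using finite_subset by blast
next
  let ?e = "\<lambda>w. (norm (q - x w))\<^sup>2"
  have ew: "\<forall>w\<in>{1..n}-{a,b}. ?e a \<le> ?e w \<and> ?e b \<le> ?e w"
    using near by (auto intro: power_mono)
  fix y assume "y \<in> (\<lambda>(c,d). (norm (q - x c))\<^sup>2 / 2 + (norm (q - x d))\<^sup>2 / 2) ` pairs n"
  then obtain c d where cd: "(c,d) \<in> pairs n" "y = ?e c / 2 + ?e d / 2" by auto
  have "?e a + ?e b \<le> ?e c + ?e d"
    using pair_le_aux[OF assms(3) _ ew, of c d] cd by (auto simp: pairs_def)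
  then show "(norm (q - x a))\<^sup>2 / 2 + (norm (q - x b))\<^sup>2 / 2 \<le> y" using cd by simp
next
  have "(min a b, max a b) \<in> pairs n" using assms by (auto simp: pairs_def)
  moreover have "(norm (q - x a))\<^sup>2 / 2 + (norm (q - x b))\<^sup>2 / 2 =
     (\<lambda>(c,d). (norm (q - x c))\<^sup>2 / 2 + (norm (q - x d))\<^sup>2 / 2) (min a b, max a b)"
    by (cases "a \<le> b") (auto simp: min_def max_def)
  ultimately show "(norm (q - x a))\<^sup>2 / 2 + (norm (q - x b))\<^sup>2 / 2 \<in>
      (\<lambda>(c,d). (norm (q - x c))\<^sup>2 / 2 + (norm (q - x d))\<^sup>2 / 2) ` pairs n" by blast
qed

lemma Min_le_pair:
  fixes x :: "nat \<Rightarrow> pt"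
  assumes "a \<in> {1..n}" "b \<in> {1..n}" "a \<noteq> b"
  shows "Min ((\<lambda>(c,d). (norm (q - x c))\<^sup>2 / 2 + (norm (q - x d))\<^sup>2 / 2) ` pairs n)
     \<le> (norm (q - x a))\<^sup>2 / 2 + (norm (q - x b))\<^sup>2 / 2"
proof -
  have "pairs n \<subseteq> {1..n} \<times> {1..n}" by (auto simp: pairs_def)
  then have fin: "finite ((\<lambda>(c,d). (norm (q - x c))\<^sup>2 / 2 + (norm (q - x d))\<^sup>2 / 2) ` pairs n)"
    using finite_subset by blast
  have "(min a b, max a b) \<in> pairs n" using assms by (auto simp: pairs_def)
  moreover have "(norm (q - x a))\<^sup>2 / 2 + (norm (q - x b))\<^sup>2 / 2 =
     (\<lambda>(c,d). (norm (q - x c))\<^sup>2 / 2 + (norm (q - x d))\<^sup>2 / 2) (min a b, max a b)"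
    by (cases "a \<le> b") (auto simp: min_def max_def)
  ultimately show ?thesis using fin by (metis (no_types, lifting) Min_le image_eqI)
qed



lemma two_sets:
  fixes i j a b :: nat
  assumes "i \<noteq> j" "a \<noteq> b" "\<not> ((i = a \<and> j = b) \<or> (i = b \<and> j = a))"
  shows "\<exists>v w. v \<in> {i,j} \<and> v \<notin> {a,b} \<and> w \<in> {a,b} \<and> w \<notin> {i,j}"
  using assms by auto

theorem mainTheorem6:
  fixes Q :: "(real^2) set" and \<phi> :: "real^2 \<Rightarrow> real" and n :: nat and p :: "nat \<Rightarrow> real^2"
  assumes "compact Q" and "convex_polygon Q"
    and "C2_on Q \<phi>" and "\<forall>q\<in>Q. \<phi> q \<ge> 0"
    and "n \<ge> 3"
    and "\<forall>i\<in>{1..n}. p i \<in> Q" and "inj_on p {1..n}"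
    and "\<forall>i\<in>{1..n}. MW Q \<phi> n p i > 0"
  shows "H Q \<phi> n (\<lambda>i. CW Q \<phi> n p i) \<le> H Q \<phi> n p
    \<and> ((\<exists>i\<in>{1..n}. p i \<noteq> CW Q \<phi> n p i) \<longrightarrow> H Q \<phi> n (\<lambda>i. CW Q \<phi> n p i) < H Q \<phi> n p)"
proof -
  note Qc = assms(1) and phipos = assms(4) and n3 = assms(5) and injp = assms(7) and MWpos = assms(8)
  let ?S = "{1..n}"
  have finS: "finite ?S" by simp
  obtain U D1 D2 where U: "open U" "Q \<subseteq> U"
      "\<forall>x\<in>U. (\<phi> has_derivative blinfun_apply (D1 x)) (at x)"
    using assms(3) unfolding C2_on_def by blast
  have phic: "continuous_on Q \<phi>"
    by (meson U has_derivative_continuous continuous_at_imp_continuous_on subsetD)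
  have Vsub: "VT Q n p i j \<subseteq> Q" for i j by (auto simp: VT_def)
  have Vcomp: "compact (VT Q n p i j)" for i j
  proof -
    have "VT Q n p i j = Q \<inter> (\<Inter>v\<in>{i,j}. \<Inter>w\<in>?S-{i,j}. {q. norm (q - p v) \<le> norm (q - p w)})"
      by (auto simp: VT_def)
    moreover have "closed (\<Inter>v\<in>{i,j}. \<Inter>w\<in>?S-{i,j}. {q. norm (q - p v) \<le> norm (q - p w)})"
      by (intro closed_INT ballI closed_Collect_le continuous_intros)
    ultimately show ?thesis using Qc by (simp add: compact_Int_closed)
  qed
  have Vphi: "continuous_on (VT Q n p i j) \<phi>" for i j
    using continuous_on_subset[OF phic Vsub] .
  have Vsym: "VT Q n p i j = VT Q n p j i" for i j by (simp add: VT_def insert_commute)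
  define c where "c = (\<lambda>i. CW Q \<phi> n p i)"
  define m where "m i j = integral (VT Q n p i j) \<phi>" for i j
  define I where "I i j = integral (VT Q n p i j) (\<lambda>q. \<phi> q *\<^sub>R q)" for i j
  define Ev where "Ev i j y = integral (VT Q n p i j) (\<lambda>q. (norm (q - y))\<^sup>2 * \<phi> q)" for i j y
  define T where "T x q i j = (if q \<in> VT Q n p i j then (norm (q - x i))\<^sup>2 * \<phi> q / 2 else 0)"
    for x :: "nat \<Rightarrow> pt" and q i j
  define Kint where "Kint x q = (\<Sum>i\<in>?S. \<Sum>j\<in>?S-{i}. T x q i j)" for x q
  define K where "K x = integral Q (Kint x)" for x

  have termint: "(\<lambda>q. T x q i j) integrable_on Q" for x i j
  proof -
    have "(\<lambda>q. (norm (q - x i))\<^sup>2 * \<phi> q / 2) integrable_on (VT Q n p i j \<inter> Q)"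
      using Vsub[of i j] by (simp add: Int_absorb2) (rule cont_int[OF Vcomp], intro continuous_intros Vphi)
    then show ?thesis unfolding T_def by (simp only: integrable_restrict_Int)
  qed
  have termintg: "integral Q (\<lambda>q. T x q i j) = Ev i j (x i) / 2" for x i j
  proof -
    have "integral Q (\<lambda>q. T x q i j) = integral (VT Q n p i j \<inter> Q) (\<lambda>q. (norm (q - x i))\<^sup>2 * \<phi> q / 2)"
      unfolding T_def by (rule integral_restrict_Int)
    also have "\<dots> = Ev i j (x i) / 2" using Vsub[of i j] by (simp add: Int_absorb2 Ev_def)
    finally show ?thesis .
  qed
  have Kint_int: "Kint x integrable_on Q" for x
    unfolding Kint_def by (intro integrable_sum finS finite_Diff termint)
  have Kx: "K x = (\<Sum>i\<in>?S. \<Sum>j\<in>?S-{i}. Ev i j (x i) / 2)" for x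
  proof -
    have "K x = (\<Sum>i\<in>?S. integral Q (\<lambda>q. \<Sum>j\<in>?S-{i}. T x q i j))"
      unfolding K_def Kint_def by (intro integral_sum finS integrable_sum finite_Diff termint)
    also have "\<dots> = (\<Sum>i\<in>?S. \<Sum>j\<in>?S-{i}. integral Q (\<lambda>q. T x q i j))"
      by (intro sum.cong refl integral_sum finite_Diff finS termint)
    finally show ?thesis by (simp add: termintg)
  qed

  define Z where "Z = \<Union>((\<lambda>(v,w). {q. norm (q - p v) = norm (q - p w)}) ` {(v,w). v \<in> ?S \<and> w \<in> ?S \<and> v \<noteq> w})"
  have negZ: "negligible Z"
    unfolding Z_def
  proof (rule negligible_Union)
    have "{(v,w). v \<in> ?S \<and> w \<in> ?S \<and> v \<noteq> w} \<subseteq> ?S \<times> ?S" by auto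
    then show "finite ((\<lambda>(v,w). {q. norm (q - p v) = norm (q - p w)}) ` {(v,w). v \<in> ?S \<and> w \<in> ?S \<and> v \<noteq> w})"
      using finite_subset by blast
  next
    fix X assume "X \<in> (\<lambda>(v,w). {q. norm (q - p v) = norm (q - p w)}) ` {(v,w). v \<in> ?S \<and> w \<in> ?S \<and> v \<noteq> w}"
    then obtain v w where "v \<in> ?S" "w \<in> ?S" "v \<noteq> w" "X = {q. norm (q - p v) = norm (q - p w)}" by auto
    moreover have "p v \<noteq> p w" using injp \<open>v \<in> ?S\<close> \<open>w \<in> ?S\<close> \<open>v \<noteq> w\<close> by (meson inj_on_def)
    ultimately show "negligible X" using tie_negligible by blast
  qed

  have near: "\<exists>a b. a \<in> ?S \<and> b \<in> ?S \<and> a \<noteq> b \<and> q \<in> VT Q n p a b" if "q \<in> Q" for q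
  proof -
    obtain a b where ab: "a \<in> ?S" "b \<in> ?S" "a \<noteq> b"
      "\<forall>w\<in>?S-{a,b}. norm (q - p a) \<le> norm (q - p w) \<and> norm (q - p b) \<le> norm (q - p w)"
      using nearest[OF n3, of "\<lambda>w. norm (q - p w)"] by blast
    then have "q \<in> VT Q n p a b" using that by (auto simp: VT_def)
    then show ?thesis using ab by blast
  qed

  have Hp: "H Q \<phi> n p = K p"
    unfolding H_def K_def
  proof (rule integral_spike[OF negZ])
    fix q assume q: "q \<in> Q - Z"
    obtain a b where ab: "a \<in> ?S" "b \<in> ?S" "a \<noteq> b" "q \<in> VT Q n p a b"
      using near q by blast
    have ab': "\<forall>w\<in>?S-{a,b}. norm (q - p a) \<le> norm (q - p w) \<and> norm (q - p b) \<le> norm (q - p w)"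
      using ab(4) by (auto simp: VT_def)
    have uniq: "(i = a \<and> j = b) \<or> (i = b \<and> j = a)"
      if ij: "i \<in> ?S" "j \<in> ?S - {i}" "q \<in> VT Q n p i j" for i j
    proof (rule ccontr)
      assume nc: "\<not> ((i = a \<and> j = b) \<or> (i = b \<and> j = a))"
      obtain v w where vw: "v \<in> {i,j}" "v \<notin> {a,b}" "w \<in> {a,b}" "w \<notin> {i,j}"
        using two_sets[OF _ ab(3) nc] ij by blast
      have vS: "v \<in> ?S" using vw ij by auto
      have wS: "w \<in> ?S" using vw ab by auto
      have "norm (q - p v) \<le> norm (q - p w)" using ij(3) vw wS by (auto simp: VT_def)
      moreover have "norm (q - p w) \<le> norm (q - p v)" using ab(4) vw vS by (auto simp: VT_def)
      ultimately have "norm (q - p v) = norm (q - p w)" by simp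
      moreover have "v \<noteq> w" using vw by auto
      ultimately have "q \<in> Z" using vS wS unfolding Z_def by blast
      then show False using q by blast
    qed
    have "Kint p q = T p q a b + T p q b a"
      unfolding Kint_def
      by (rule dsum_eq[OF finS ab(1,2,3)]) (use uniq in \<open>auto simp: T_def split: if_splits\<close>)
    also have "\<dots> = ((norm (q - p a))\<^sup>2 / 2 + (norm (q - p b))\<^sup>2 / 2) * \<phi> q"
      using ab(4) Vsym[of a b] by (simp add: T_def algebra_simps)
    also have "\<dots> = Min ((\<lambda>(a,b). (norm (q - p a))\<^sup>2 / 2 + (norm (q - p b))\<^sup>2 / 2) ` pairs n) * \<phi> q"
      using Min_at[OF ab(1,2,3) ab'] by simp
    finally show "Kint p q = Min ((\<lambda>(a,b). (norm (q - p a))\<^sup>2 / 2 + (norm (q - p b))\<^sup>2 / 2) ` pairs n) * \<phi> q" .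
  qed

  have Kint_nonneg: "0 \<le> Kint x q" if "q \<in> Q" for x q
    unfolding Kint_def T_def using phipos that by (intro sum_nonneg) auto

  have Hc: "H Q \<phi> n c \<le> K c"
  proof (cases "(\<lambda>q. Min ((\<lambda>(a,b). (norm (q - c a))\<^sup>2 / 2 + (norm (q - c b))\<^sup>2 / 2) ` pairs n) * \<phi> q) integrable_on Q")
    case True
    show ?thesis unfolding H_def K_def
    proof (rule integral_le[OF True Kint_int])
      fix q assume q: "q \<in> Q"
      obtain a b where ab: "a \<in> ?S" "b \<in> ?S" "a \<noteq> b" "q \<in> VT Q n p a b"
        using near q by blast
      have "Min ((\<lambda>(a,b). (norm (q - c a))\<^sup>2 / 2 + (norm (q - c b))\<^sup>2 / 2) ` pairs n) * \<phi> q
          \<le> ((norm (q - c a))\<^sup>2 / 2 + (norm (q - c b))\<^sup>2 / 2) * \<phi> q"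
        using Min_le_pair[OF ab(1,2,3), of q c] phipos q by (intro mult_right_mono) auto
      also have "\<dots> = T c q a b + T c q b a"
        using ab(4) Vsym[of a b] by (simp add: T_def algebra_simps)
      also have "\<dots> \<le> Kint c q"
        unfolding Kint_def using phipos q by (intro dsum_ge[OF finS ab(1,2,3)]) (auto simp: T_def)
      finally show "Min ((\<lambda>(a,b). (norm (q - c a))\<^sup>2 / 2 + (norm (q - c b))\<^sup>2 / 2) ` pairs n) * \<phi> q \<le> Kint c q" .
    qed
  next
    case False
    then have "H Q \<phi> n c = 0" unfolding H_def by (simp add: not_integrable_integral)
    moreover have "0 \<le> K c" unfolding K_def by (rule integral_nonneg[OF Kint_int Kint_nonneg])
    ultimately show ?thesis by simp
  qed

  obtain R where R: "\<forall>q\<in>Q. norm q \<le> R"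
    using compact_imp_bounded[OF Qc] bounded_iff by blast
  have mc: "mass \<phi> (VT Q n p i j) *\<^sub>R centroid \<phi> (VT Q n p i j) = I i j" for i j
  proof (cases "m i j = 0")
    case False
    then show ?thesis by (simp add: mass_def centroid_def I_def m_def)
  next
    case True
    have i1: "(\<lambda>q. \<phi> q *\<^sub>R q) integrable_on VT Q n p i j"
      by (rule cont_int[OF Vcomp]) (intro continuous_intros Vphi)
    have i2: "(\<lambda>q. R * \<phi> q) integrable_on VT Q n p i j"
      by (rule cont_int[OF Vcomp]) (intro continuous_intros Vphi)
    have "norm (I i j) \<le> integral (VT Q n p i j) (\<lambda>q. R * \<phi> q)"
      unfolding I_def
    proof (rule integral_norm_bound_integral[OF i1 i2])
      fix q assume "q \<in> VT Q n p i j"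
      then have "q \<in> Q" using Vsub by blast
      then have "0 \<le> \<phi> q" "norm q \<le> R" using phipos R by auto
      then show "norm (\<phi> q *\<^sub>R q) \<le> R * \<phi> q" by (simp add: mult.commute[of "\<phi> q"] mult_right_mono)
    qed
    also have "\<dots> = 0" using True by (simp add: m_def)
    finally have "I i j = 0" by simp
    then show ?thesis using True by (simp add: mass_def m_def)
  qed

  have par: "(\<Sum>j\<in>?S-{i}. Ev i j (p i)) = (\<Sum>j\<in>?S-{i}. Ev i j (c i)) + MW Q \<phi> n p i * (norm (c i - p i))\<^sup>2"
    if iS: "i \<in> ?S" for i
  proof -
    have Psub: "Pset Q n p i \<subseteq> ?S - {i}" by (auto simp: Pset_def)
    have notP: "VT Q n p i j = {}" if "j \<in> ?S - {i} - Pset Q n p i" for j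
      using that by (auto simp: Pset_def)
    have MWeq: "MW Q \<phi> n p i = (\<Sum>j\<in>?S-{i}. m i j)"
      unfolding MW_def mass_def m_def
      by (rule sum.mono_neutral_left) (use Psub notP in auto)
    have SCeq: "(\<Sum>j\<in>Pset Q n p i. mass \<phi> (VT Q n p i j) *\<^sub>R centroid \<phi> (VT Q n p i j)) = (\<Sum>j\<in>?S-{i}. I i j)"
    proof -
      have "(\<Sum>j\<in>Pset Q n p i. mass \<phi> (VT Q n p i j) *\<^sub>R centroid \<phi> (VT Q n p i j))
          = (\<Sum>j\<in>?S-{i}. mass \<phi> (VT Q n p i j) *\<^sub>R centroid \<phi> (VT Q n p i j))"
        by (rule sum.mono_neutral_left) (use Psub notP in \<open>auto simp: mass_def\<close>)
      then show ?thesis by (simp add: mc)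
    qed
    have MWp: "MW Q \<phi> n p i > 0" using MWpos iS by blast
    have MWc: "MW Q \<phi> n p i *\<^sub>R c i = (\<Sum>j\<in>?S-{i}. I i j)"
      unfolding c_def CW_def using MWp SCeq by simp
    have cell: "Ev i j (p i) = Ev i j (c i) + 2 * ((I i j - m i j *\<^sub>R c i) \<bullet> (c i - p i)) + m i j * (norm (c i - p i))\<^sup>2" for j
      unfolding Ev_def I_def m_def by (rule cell_id[OF Vcomp Vphi])
    have zero: "(\<Sum>j\<in>?S-{i}. I i j - m i j *\<^sub>R c i) = 0"
      using MWc MWeq by (simp add: sum_subtractf scaleR_sum_left)
    have "(\<Sum>j\<in>?S-{i}. Ev i j (p i)) = (\<Sum>j\<in>?S-{i}. Ev i j (c i)) + 2 * ((\<Sum>j\<in>?S-{i}. I i j - m i j *\<^sub>R c i) \<bullet> (c i - p i)) + (\<Sum>j\<in>?S-{i}. m i j) * (norm (c i - p i))\<^sup>2"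
      unfolding cell by (simp add: sum.distrib inner_sum_left sum_distrib_left sum_distrib_right)
    then show ?thesis using zero MWeq by simp
  qed

  have Kdiff: "K p = K c + (\<Sum>i\<in>?S. MW Q \<phi> n p i * (norm (c i - p i))\<^sup>2 / 2)"
  proof -
    have "K p = (\<Sum>i\<in>?S. (\<Sum>j\<in>?S-{i}. Ev i j (p i)) / 2)" by (simp add: Kx sum_divide_distrib)
    also have "\<dots> = (\<Sum>i\<in>?S. (\<Sum>j\<in>?S-{i}. Ev i j (c i)) / 2 + MW Q \<phi> n p i * (norm (c i - p i))\<^sup>2 / 2)"
    proof (intro sum.cong refl)
      fix i assume "i \<in> ?S"
      show "(\<Sum>j\<in>?S-{i}. Ev i j (p i)) / 2 = (\<Sum>j\<in>?S-{i}. Ev i j (c i)) / 2 + MW Q \<phi> n p i * (norm (c i - p i))\<^sup>2 / 2"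
        using par[OF \<open>i \<in> ?S\<close>] by (simp add: add_divide_distrib)
    qed
    also have "\<dots> = K c + (\<Sum>i\<in>?S. MW Q \<phi> n p i * (norm (c i - p i))\<^sup>2 / 2)"
      by (simp add: Kx sum_divide_distrib sum.distrib)
    finally show ?thesis .
  qed
  have nn: "0 \<le> (\<Sum>i\<in>?S. MW Q \<phi> n p i * (norm (c i - p i))\<^sup>2 / 2)"
    using MWpos by (intro sum_nonneg) (simp add: less_imp_le)
  have strict: "0 < (\<Sum>i\<in>?S. MW Q \<phi> n p i * (norm (c i - p i))\<^sup>2 / 2)"
    if ex: "\<exists>i\<in>?S. p i \<noteq> c i"
  proof -
    obtain i where i: "i \<in> ?S" "p i \<noteq> c i" using ex by blast
    have "0 < MW Q \<phi> n p i * (norm (c i - p i))\<^sup>2 / 2" using MWpos i by simp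
    also have "\<dots> \<le> (\<Sum>i\<in>?S. MW Q \<phi> n p i * (norm (c i - p i))\<^sup>2 / 2)"
      using MWpos i by (intro member_le_sum) (auto simp: less_imp_le)
    finally show ?thesis .
  qed
  show ?thesis
    using Hp Hc Kdiff nn strict unfolding c_def by fastforce
qed
end
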